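(* Let $g:\mathbb{R}^d\to\mathbb{R}$ be convex and twice differentiable, minimized at $x^*$ with $\|x^*\|\le R$, $g^*=g(x^* )$, and $\epsilon>0$. Let $\omega:\mathbb{R}_+\to\mathbb{R}_+$ be continuously differentiable with $0<\omega'(s)\le\gamma\,\omega(s)/s$ for some $\gamma\ge1$ and all $s>0$. Let $\alpha\in[0,1)$, $\mu=\frac{8}{\sqrt{1-\alpha}}$, $c\ge1$ with $64(\alpha+\frac1c)\gamma^2\le1$, and suppose $\delta\le\min\{\frac{\epsilon}{9\mu Rc((1+\alpha)c+1)},\ 8\mu R\,\omega(8\mu R)\}$. Then for any $x^{(1)},x^{(2)}\in\mathbb{R}^d$ with $\|x^{(1)}-x^*\|,\|x^{(2)}-x^*\|\le\mu R$ and any $A$ with $\frac{1}{2\omega(2\mu R)}\le A\le\frac{R^2}{\epsilon}$, there is an algorithm that, after at most $6+\log_2\big[\big(\frac{160\mu Rc}{\delta}+\frac{9R^2}{\epsilon}\big)\omega(8c\mu R)\big]$ calls to an $(\alpha,\delta)$-approximate $\omega$-proximal step oracle for $g$, returns $y\in\mathbb{R}^d$ and $\lambda>0$ such that, writing $a=\frac{\lambda+\sqrt{\lambda^2+4\lambda A}}{2}$ and $\tilde x=\frac{a}{A+a}x^{(1)}+\frac{A}{A+a}x^{(2)}$, either (i) $g(y)\le g^*+\epsilon$ and $\omega(\|y-\tilde x\|)\|y-\tilde x\|\le c\delta$; or (ii) $\frac12\le\lambda\,\omega(\|y-\tilde x\|)\le1$, $\omega(\|y-\tilde x\|)\|y-\tilde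 x\|>c\delta$, and $\|\nabla g(y)+\omega(\|y-\tilde x\|)(y-\tilde x)\|\le\alpha\,\omega(\|y-\tilde x\|)\|y-\tilde x\|+\delta$.
   Context: Let $\omega:\mathbb{R}_+\to\mathbb{R}_+$ be non-decreasing, $\delta\ge0$, $\alpha\in[0,1)$. An $(\alpha,\delta)$-approximate $\omega$-proximal step oracle for $g$ is a procedure that, queried at any $x\in\mathbb{R}^d$, returns some $y$ with $\|\nabla g(y)+\omega(\|y-x\|)(y-x)\|\le\alpha\,\omega(\|y-x\|)\|y-x\|+\delta$ (the returned $y$ may be any such point, possibly different on repeated queries). *)

theory Defs
  imports "HOL-Analysis.Analysis"
begin

definition grad :: "('a::real_inner \<Rightarrow> real) \<Rightarrow> 'a \<Rightarrow> 'a" where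
  "grad g x = (THE D. GDERIV g x :> D)"

definition approx_prox_step ::
  "('a::real_inner \<Rightarrow> real) \<Rightarrow> (real \<Rightarrow> real) \<Rightarrow> real \<Rightarrow> real \<Rightarrow> 'a \<Rightarrow> 'a \<Rightarrow> bool" where
  "approx_prox_step g \<omega> \<alpha> \<delta> x y \<longleftrightarrow>
     norm (grad g y + \<omega> (norm (y - x)) *\<^sub>R (y - x))
       \<le> \<alpha> * \<omega> (norm (y - x)) * norm (y - x) + \<delta>"

text \<open>An oracle is modelled adversarially: its answer may depend on the whole history of
  previous (query, answer) pairs and on the current query, so repeated queries may receive
  different answers.\<close>
definition is_approx_prox_oracle ::
  "('a::real_inner \<Rightarrow> real) \<Rightarrow> (real \<Rightarrow> real) \<Rightarrow> real \<Rightarrow> real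
     \<Rightarrow> (('a \<times> 'a) list \<Rightarrow> 'a \<Rightarrow> 'a) \<Rightarrow> bool" where
  "is_approx_prox_oracle g \<omega> \<alpha> \<delta> Orc \<longleftrightarrow> (\<forall>h x. approx_prox_step g \<omega> \<alpha> \<delta> x (Orc h x))"

text \<open>An oracle algorithm is a (deterministic, arbitrary) map from the interaction history
  to either a next query (Inl x) or a final output (Inr out).  hist alg Orc k is the history
  after k rounds of interaction.\<close>
primrec hist :: "(('a \<times> 'a) list \<Rightarrow> 'a + 'b) \<Rightarrow> (('a \<times> 'a) list \<Rightarrow> 'a \<Rightarrow> 'a)
                  \<Rightarrow> nat \<Rightarrow> ('a \<times> 'a) list" where
  "hist alg Orc 0 = []"
| "hist alg Orc (Suc k) =
     (case alg (hist alg Orc k) of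
        Inl x \<Rightarrow> hist alg Orc k @ [(x, Orc (hist alg Orc k) x)]
      | Inr _ \<Rightarrow> hist alg Orc k)"

definition returns_within ::
  "(('a \<times> 'a) list \<Rightarrow> 'a + 'b) \<Rightarrow> (('a \<times> 'a) list \<Rightarrow> 'a \<Rightarrow> 'a) \<Rightarrow> real \<Rightarrow> 'b \<Rightarrow> bool" where
  "returns_within alg Orc N out \<longleftrightarrow>
     (\<exists>k::nat. real k \<le> N \<and> (\<forall>j<k. isl (alg (hist alg Orc j))) \<and> alg (hist alg Orc k) = Inr out)"

end

theory Submission
  imports Defs
begin


lemma convex_tangent:
  fixes g :: "'a::real_inner \<Rightarrow> real"
  assumes cv: "convex_on UNIV g" and d: "GDERIV g y :> D"
  shows "g z \<ge> g y + inner D (z - y)"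
proof -
  define v where "v = z - y"
  define \<phi> where "\<phi> t = g (y + t *\<^sub>R v)" for t :: real
  have cphi: "convex_on UNIV \<phi>"
  proof (rule convex_onI)
    fix u s t :: real assume "0 < u" "u < 1"
    have e: "y + ((1 - u) *\<^sub>R s + u *\<^sub>R t) *\<^sub>R v = (1 - u) *\<^sub>R (y + s *\<^sub>R v) + u *\<^sub>R (y + t *\<^sub>R v)"
      by (simp add: algebra_simps)
    show "\<phi> ((1 - u) *\<^sub>R s + u *\<^sub>R t) \<le> (1 - u) * \<phi> s + u * \<phi> t"
      unfolding \<phi>_def e using convex_onD[OF cv, of u] \<open>0 < u\<close> \<open>u < 1\<close> by simp
  qed simp
  have dd: "(g has_derivative (\<lambda>h. inner h D)) (at (y + 0 *\<^sub>R v))"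
    using d by (simp add: gderiv_def)
  have "((\<lambda>t. y + t *\<^sub>R v) has_derivative (\<lambda>t. t *\<^sub>R v)) (at 0)"
    by (auto intro!: derivative_eq_intros)
  from has_derivative_compose[OF this dd]
  have "(\<phi> has_derivative (\<lambda>t. inner (t *\<^sub>R v) D)) (at 0)"
    unfolding \<phi>_def o_def by (simp add: comp_def)
  hence "(\<phi> has_field_derivative inner v D) (at 0 within UNIV)"
    by (simp add: has_field_derivative_def mult.commute[of _ "inner v D"])
  from convex_on_imp_above_tangent[OF cphi _ _ _ this, of 1]
  have "\<phi> 1 - \<phi> 0 \<ge> inner v D * (1 - 0)" by simp
  thus ?thesis unfolding \<phi>_def v_def by (simp add: inner_commute)
qed

lemma grad_ex:
  fixes g :: "'a::euclidean_space \<Rightarrow> real"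
  assumes "g differentiable (at y)"
  shows "GDERIV g y :> grad g y"
proof -
  obtain f' where f': "(g has_derivative f') (at y)" using assms differentiable_def by blast
  have lin: "linear f'" using f' has_derivative_linear by blast
  define D where "D = (\<Sum>b\<in>Basis. f' b *\<^sub>R b)"
  have rep: "f' h = inner h D" for h
  proof -
    have "f' h = f' (\<Sum>b\<in>Basis. inner h b *\<^sub>R b)" by (simp add: euclidean_representation)
    also have "\<dots> = (\<Sum>b\<in>Basis. inner h b * f' b)"
      using lin by (simp add: linear_sum linear_scale)
    also have "\<dots> = inner h D" unfolding D_def by (simp add: inner_sum_right mult.commute)
    finally show ?thesis .
  qed
  have ex: "GDERIV g y :> D" using f' rep by (simp add: gderiv_def) (metis (no_types) ext)
  have uni: "E = D" if "GDERIV g y :> E" for E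
  proof -
    have "(\<lambda>h. inner h E) = (\<lambda>h. inner h D)"
      using has_derivative_unique that ex unfolding gderiv_def by blast
    hence "inner (E - D) E = inner (E - D) D" by metis
    hence "inner (E - D) (E - D) = 0" by (simp add: inner_diff_right)
    thus ?thesis by simp
  qed
  show ?thesis unfolding grad_def using ex uni by (metis theI)
qed


lemma omega_at:
  assumes d: "\<forall>s\<ge>0. (\<omega> has_real_derivative \<omega>' s) (at s within {0..})" and "x > (0::real)"
  shows "(\<omega> has_real_derivative \<omega>' x) (at x)"
proof -
  have "x \<in> interior {0::real..}" using assms(2) by simp
  hence "at x within {0..} = at x" by (rule at_within_interior)
  thus ?thesis using d assms(2) by (metis less_imp_le)
qed

lemma omega_cont:
  assumes d: "\<forall>s\<ge>0. (\<omega> has_real_derivative \<omega>' s) (at s within {0..})"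
  shows "continuous_on {0..} \<omega>"
  unfolding continuous_on_eq_continuous_within
  using d DERIV_continuous by fastforce

lemma omega_strict_mono:
  assumes d: "\<forall>s\<ge>0. (\<omega> has_real_derivative \<omega>' s) (at s within {0..})"
    and b: "\<forall>s>0. 0 < \<omega>' s \<and> \<omega>' s \<le> \<gamma> * \<omega> s / s"
    and "0 \<le> s" "s < t"
  shows "\<omega> s < \<omega> t"
proof (rule DERIV_pos_imp_increasing_open[OF \<open>s < t\<close>])
  fix x assume "s < x" "x < t"
  hence "x > 0" using \<open>0 \<le> s\<close> by simp
  thus "\<exists>y. (\<omega> has_real_derivative y) (at x) \<and> 0 < y"
    using omega_at[OF d] b by blast
next
  show "continuous_on {s..t} \<omega>"
    using omega_cont[OF d] by (rule continuous_on_subset) (use \<open>0 \<le> s\<close> in auto)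
qed

lemma omega_mono:
  assumes d: "\<forall>s\<ge>0. (\<omega> has_real_derivative \<omega>' s) (at s within {0..})"
    and b: "\<forall>s>0. 0 < \<omega>' s \<and> \<omega>' s \<le> \<gamma> * \<omega> s / s"
    and "0 \<le> s" "s \<le> t"
  shows "\<omega> s \<le> \<omega> t"
  using omega_strict_mono[OF d b, of s t] assms(3,4) by (cases "s = t") auto

lemma omega_growth:
  assumes d: "\<forall>s\<ge>0. (\<omega> has_real_derivative \<omega>' s) (at s within {0..})"
    and b: "\<forall>s>0. 0 < \<omega>' s \<and> \<omega>' s \<le> \<gamma> * \<omega> s / s"
    and nn: "\<forall>s\<ge>0. \<omega> s \<ge> 0"
    and "0 < r" "r \<le> t"
  shows "\<omega> t \<le> \<omega> r * exp (\<gamma> * (t / r - 1))"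
proof -
  define k where "k = \<gamma> / r"
  define F where "F s = \<omega> s * exp (- k * s)" for s
  have "F t \<le> F r"
  proof (rule DERIV_nonpos_imp_nonincreasing[OF \<open>r \<le> t\<close>])
    fix x assume x: "r \<le> x" "x \<le> t"
    hence xp: "x > 0" using \<open>0 < r\<close> by simp
    have D: "(F has_real_derivative (\<omega>' x * exp (- k * x) + \<omega> x * (exp (- k * x) * (- k)))) (at x)"
      unfolding F_def
      by (auto intro!: derivative_eq_intros omega_at[OF d xp])
    have w: "\<omega>' x \<le> \<gamma> * \<omega> x / x" and wp: "0 < \<omega>' x" using b xp by auto
    have "0 < \<gamma> * \<omega> x / x" using w wp by linarith
    hence g0: "\<gamma> * \<omega> x \<ge> 0" using xp by (simp add: zero_less_divide_iff)
    have "\<gamma> * \<omega> x / x \<le> \<gamma> * \<omega> x / r"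
      using g0 x \<open>0 < r\<close> by (intro divide_left_mono) auto
    hence le: "\<omega>' x \<le> \<omega> x * k" using w by (simp add: k_def mult.commute)
    have "\<omega>' x * exp (- k * x) + \<omega> x * (exp (- k * x) * (- k)) = exp (- k * x) * (\<omega>' x - \<omega> x * k)"
      by (simp add: algebra_simps)
    also have "\<dots> \<le> 0" using le by (intro mult_nonneg_nonpos) auto
    finally show "\<exists>y. (F has_real_derivative y) (at x) \<and> y \<le> 0" using D by blast
  qed
  hence "\<omega> t * exp (- k * t) \<le> \<omega> r * exp (- k * r)"
    unfolding F_def .
  hence "\<omega> t * exp (- k * t) * exp (k * t) \<le> \<omega> r * exp (- k * r) * exp (k * t)"
    by (rule mult_right_mono) simp
  hence "\<omega> t \<le> \<omega> r * exp (k * t - k * r)"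
    by (simp add: mult.assoc exp_add[symmetric] exp_diff)
  also have "k * t - k * r = \<gamma> * (t / r - 1)"
    using \<open>0 < r\<close> by (simp add: k_def field_simps)
  finally show ?thesis .
qed


locale psetup =
  fixes \<omega> \<omega>' :: "real \<Rightarrow> real"
    and \<gamma> \<alpha> \<mu> c \<delta> \<epsilon> R A :: real
    and x1 x2 :: "'a::euclidean_space"
  assumes eps: "\<epsilon> > 0"
    and R: "R > 0"
    and omega_nonneg: "\<forall>s\<ge>0. \<omega> s \<ge> 0"
    and omega_deriv: "\<forall>s\<ge>0. (\<omega> has_real_derivative \<omega>' s) (at s within {0..})"
    and omega_deriv_bounds: "\<forall>s>0. 0 < \<omega>' s \<and> \<omega>' s \<le> \<gamma> * \<omega> s / s"
    and gamma: "\<gamma> \<ge> 1"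
    and alpha: "0 \<le> \<alpha>" "\<alpha> < 1"
    and mu: "\<mu> = 8 / sqrt (1 - \<alpha>)"
    and c: "c \<ge> 1" "64 * (\<alpha> + 1 / c) * \<gamma>^2 \<le> 1"
    and delta_pos: "\<delta> > 0"
    and delta: "\<delta> \<le> min (\<epsilon> / (9 * \<mu> * R * c * ((1 + \<alpha>) * c + 1)))
                         (8 * \<mu> * R * \<omega> (8 * \<mu> * R))"
    and A: "1 / (2 * \<omega> (2 * \<mu> * R)) \<le> A" "A \<le> R^2 / \<epsilon>"
begin

lemma om_mono: "0 \<le> s \<Longrightarrow> s \<le> t \<Longrightarrow> \<omega> s \<le> \<omega> t"
  using omega_mono[OF omega_deriv omega_deriv_bounds] by blast

lemma om_smono: "0 \<le> s \<Longrightarrow> s < t \<Longrightarrow> \<omega> s < \<omega> t"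
  using omega_strict_mono[OF omega_deriv omega_deriv_bounds] by blast

lemma om_pos: "0 < s \<Longrightarrow> 0 < \<omega> s"
  using om_smono[of 0 s] omega_nonneg by force

lemma om_growth: "0 < r \<Longrightarrow> r \<le> t \<Longrightarrow> \<omega> t \<le> \<omega> r * exp (\<gamma> * (t / r - 1))"
  using omega_growth[OF omega_deriv omega_deriv_bounds omega_nonneg] by blast

lemma mu_ge: "\<mu> \<ge> 8"
proof -
  have "sqrt (1 - \<alpha>) \<le> 1" "sqrt (1 - \<alpha>) > 0" using alpha by auto
  thus ?thesis unfolding mu by (simp add: divide_simps)
qed

lemma mu_pos: "\<mu> > 0" using mu_ge by simp

definition "\<omega>2 = \<omega> (2 * \<mu> * R)"

lemma om2_pos: "\<omega>2 > 0" unfolding \<omega>2_def using mu_pos R by (intro om_pos) simp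

lemma A_pos: "A > 0"
  using A(1) om2_pos unfolding \<omega>2_def by (smt (verit) divide_pos_pos)

lemma eps_le: "\<epsilon> \<le> 2 * R^2 * \<omega>2"
proof -
  have "1 / (2 * \<omega>2) \<le> R^2 / \<epsilon>" using A unfolding \<omega>2_def by linarith
  thus ?thesis using om2_pos eps by (simp add: field_simps)
qed

definition "\<beta> = \<alpha> + 1 / c"

lemma beta_bd: "\<beta> * \<gamma>^2 \<le> 1/64" "0 \<le> \<beta>" "\<beta> \<le> 1/64"
proof -
  show "\<beta> * \<gamma>^2 \<le> 1/64" using c(2) unfolding \<beta>_def by (simp add: algebra_simps)
  show "0 \<le> \<beta>" using c alpha unfolding \<beta>_def by simp
  have "\<gamma>^2 \<ge> 1" using gamma by simp
  thus "\<beta> \<le> 1/64" using \<open>\<beta> * \<gamma>^2 \<le> 1/64\<close> \<open>0 \<le> \<beta>\<close>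
    by (smt (verit) mult_le_cancel_left1)
qed

lemma c_ge: "c \<ge> 64 * \<gamma>^2"
proof -
  have "64 * (1/c) * \<gamma>^2 \<le> 1" using c alpha
    by (smt (verit, best) mult_right_mono distrib_left mult_nonneg_nonneg zero_le_power2)
  thus ?thesis using c by (simp add: field_simps)
qed

definition "\<eta> = 1 / (128 * \<gamma>^2)"

lemma eta_c: "\<eta> * c \<ge> 1/2" using c_ge gamma unfolding \<eta>_def by (simp add: field_simps)

lemma delta1: "\<delta> \<le> \<epsilon> / (9 * \<mu> * R * c * ((1 + \<alpha>) * c + 1))" using delta by simp
lemma delta2: "\<delta> \<le> 8 * \<mu> * R * \<omega> (8 * \<mu> * R)" using delta by simp

lemma delta_small: "\<delta> \<le> 2 * R * \<omega>2 / (9 * \<mu> * c)"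
proof -
  have pos: "9 * \<mu> * R * c > 0" using mu_pos R c by simp
  have "(1 + \<alpha>) * c + 1 \<ge> 1" using alpha c by simp
  hence p2: "(1 + \<alpha>) * c + 1 > 0" by simp
  hence "9 * \<mu> * R * c \<le> 9 * \<mu> * R * c * ((1 + \<alpha>) * c + 1)"
    using pos alpha c by (simp add: mult_le_cancel_left1)
  hence "\<epsilon> / (9 * \<mu> * R * c * ((1 + \<alpha>) * c + 1)) \<le> \<epsilon> / (9 * \<mu> * R * c)"
    using pos eps p2 mu_pos R c by (intro divide_left_mono) (auto intro!: mult_pos_pos)
  also have "\<dots> \<le> 2 * R^2 * \<omega>2 / (9 * \<mu> * R * c)"
    using eps_le pos by (intro divide_right_mono) auto
  also have "\<dots> = 2 * R * \<omega>2 / (9 * \<mu> * c)" using R by (simp add: power2_eq_square)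
  finally show ?thesis using delta1 by linarith
qed


definition "aof lam = (lam + sqrt (lam^2 + 4 * lam * A)) / 2"
definition "fof lam = aof lam / (A + aof lam)"
definition "X lam = (aof lam / (A + aof lam)) *\<^sub>R x1 + (A / (A + aof lam)) *\<^sub>R x2"

lemma aof_pos: "lam > 0 \<Longrightarrow> aof lam > 0"
proof -
  assume "lam > 0"
  moreover have "lam^2 + 4 * lam * A \<ge> 0" using \<open>lam > 0\<close> A_pos by simp
  hence "sqrt (lam^2 + 4 * lam * A) \<ge> 0" by simp
  ultimately show ?thesis unfolding aof_def by (simp add: add_pos_nonneg)
qed

lemma aof_sq: "lam > 0 \<Longrightarrow> (aof lam)^2 = lam * (A + aof lam)"
proof -
  assume l: "lam > 0"
  have nn: "lam^2 + 4 * lam * A \<ge> 0" using l A_pos by simp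
  have "(aof lam)^2 = (lam^2 + 2 * lam * sqrt (lam^2 + 4 * lam * A) + (sqrt (lam^2 + 4 * lam * A))^2) / 4"
    unfolding aof_def by (simp add: power2_eq_square field_simps)
  also have "(sqrt (lam^2 + 4 * lam * A))^2 = lam^2 + 4 * lam * A" using nn by simp
  finally show ?thesis unfolding aof_def by (simp add: field_simps power2_eq_square)
qed

lemma aof_mono: "0 < l \<Longrightarrow> l \<le> u \<Longrightarrow> aof l \<le> aof u"
proof -
  assume "0 < l" "l \<le> u"
  have "l^2 + 4 * l * A \<le> u^2 + 4 * u * A"
    using \<open>0 < l\<close> \<open>l \<le> u\<close> A_pos by (intro add_mono power_mono mult_right_mono) auto
  thus ?thesis unfolding aof_def using \<open>l \<le> u\<close> by (simp add: real_sqrt_le_mono add_mono divide_right_mono)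
qed

lemma fof_eq: "lam > 0 \<Longrightarrow> fof lam = lam / aof lam"
proof -
  assume l: "lam > 0"
  have "aof lam * aof lam = lam * (A + aof lam)" using aof_sq[OF l] by (simp add: power2_eq_square)
  moreover have "aof lam > 0" "A + aof lam > 0" using aof_pos[OF l] A_pos by auto
  ultimately show ?thesis unfolding fof_def by (simp add: field_simps)
qed

lemma fof_range: "lam > 0 \<Longrightarrow> 0 \<le> fof lam \<and> fof lam \<le> 1"
proof -
  assume "lam > 0"
  hence a: "aof lam > 0" by (rule aof_pos)
  have "0 \<le> aof lam / (A + aof lam)" using a A_pos by simp
  moreover have "aof lam / (A + aof lam) \<le> 1" using a A_pos by simp
  ultimately show ?thesis unfolding fof_def by simp
qed

lemma X_eq: "lam > 0 \<Longrightarrow> X lam = x2 + fof lam *\<^sub>R (x1 - x2)"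
proof -
  assume l: "lam > 0"
  have "A / (A + aof lam) = 1 - fof lam" using aof_pos[OF l] A_pos unfolding fof_def
    by (simp add: field_simps)
  hence e: "A / (A + aof lam) = 1 - fof lam" .
  have "X lam = fof lam *\<^sub>R x1 + (A / (A + aof lam)) *\<^sub>R x2" by (simp add: X_def fof_def)
  also have "\<dots> = fof lam *\<^sub>R x1 + (1 - fof lam) *\<^sub>R x2" by (simp only: e)
  also have "\<dots> = x2 + fof lam *\<^sub>R (x1 - x2)" by (simp add: scaleR_diff_left scaleR_diff_right)
  finally show ?thesis .
qed

lemma fof_mono: "0 < l \<Longrightarrow> l \<le> u \<Longrightarrow> fof l \<le> fof u"
proof -
  assume a: "0 < l" "l \<le> u"
  have "aof l \<le> aof u" by (rule aof_mono[OF a])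
  moreover have "aof l > 0" using aof_pos a by simp
  ultimately have "A / (A + aof u) \<le> A / (A + aof l)" using A_pos
    by (intro divide_left_mono) auto
  moreover have "aof v / (A + aof v) = 1 - A / (A + aof v)" if "v > 0" for v
    using aof_pos[OF that] A_pos by (simp add: field_simps)
  ultimately show ?thesis unfolding fof_def using a by simp
qed

lemma fof_diff: "0 < l \<Longrightarrow> l \<le> u \<Longrightarrow> fof u - fof l \<le> (u - l) / aof l"
proof -
  assume a: "0 < l" "l \<le> u"
  have al: "aof l > 0" using aof_pos a by simp
  have "u / aof u \<le> u / aof l" using a al aof_mono[OF a] by (intro divide_left_mono) auto
  thus ?thesis using fof_eq[of u] fof_eq[of l] a al by (simp add: diff_divide_distrib)
qed

lemma aof_lb: "l > 0 \<Longrightarrow> (aof l)^2 \<ge> l * A"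
  using aof_sq[of l] aof_pos[of l] by simp

lemma X_dist: "0 < l \<Longrightarrow> 0 < u \<Longrightarrow> norm (X l - X u) = \<bar>fof l - fof u\<bar> * norm (x1 - x2)"
proof -
  assume "0 < l" "0 < u"
  hence "X l - X u = (x2 + fof l *\<^sub>R (x1 - x2)) - (x2 + fof u *\<^sub>R (x1 - x2))"
    using X_eq[of l] X_eq[of u] by simp
  hence "X l - X u = (fof l - fof u) *\<^sub>R (x1 - x2)"
    by (simp add: scaleR_diff_left)
  thus ?thesis by simp
qed

definition "rr lam y = norm (y - X lam)"
definition "big lam y \<longleftrightarrow> \<omega> (rr lam y) * rr lam y > c * \<delta>"
definition "Low lam y \<longleftrightarrow> big lam y \<and> lam * \<omega> (rr lam y) < 1/2"
definition "High lam y \<longleftrightarrow> big lam y \<and> lam * \<omega> (rr lam y) > 1"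
definition "Done lam y \<longleftrightarrow> \<not> big lam y \<or> (1/2 \<le> lam * \<omega> (rr lam y) \<and> lam * \<omega> (rr lam y) \<le> 1)"

end

locale gsetup = psetup \<omega> \<omega>' \<gamma> \<alpha> \<mu> c \<delta> \<epsilon> R A x1 x2
  for \<omega> \<omega>' :: "real \<Rightarrow> real"
    and \<gamma> \<alpha> \<mu> c \<delta> \<epsilon> R A :: real
    and x1 x2 :: "'a::euclidean_space" +
  fixes g :: "'a \<Rightarrow> real" and xstar :: 'a
  assumes cv: "convex_on UNIV g"
    and dif: "\<forall>x. g differentiable (at x)"
    and minx: "\<forall>x. g xstar \<le> g x"
    and n1: "norm (x1 - xstar) \<le> \<mu> * R" and n2: "norm (x2 - xstar) \<le> \<mu> * R"
begin

lemma tang: "g z \<ge> g y + inner (grad g y) (z - y)"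
  using convex_tangent[OF cv grad_ex] dif by blast

lemma Xs: "lam > 0 \<Longrightarrow> norm (X lam - xstar) \<le> \<mu> * R"
proof -
  assume l: "lam > 0"
  let ?f = "fof lam"
  have f: "0 \<le> ?f" "?f \<le> 1" using fof_range[OF l] by auto
  have "X lam - xstar = ?f *\<^sub>R (x1 - xstar) + (1 - ?f) *\<^sub>R (x2 - xstar)"
    using X_eq[OF l] by (simp add: algebra_simps)
  hence "norm (X lam - xstar) \<le> norm (?f *\<^sub>R (x1 - xstar)) + norm ((1 - ?f) *\<^sub>R (x2 - xstar))"
    by (simp only: norm_triangle_ineq)
  also have "\<dots> = ?f * norm (x1 - xstar) + (1 - ?f) * norm (x2 - xstar)"
    using f by simp
  also have "\<dots> \<le> ?f * (\<mu> * R) + (1 - ?f) * (\<mu> * R)"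
    using f n1 n2 by (intro add_mono mult_left_mono) auto
  finally show ?thesis by (simp add: algebra_simps)
qed

lemma n12: "norm (x1 - x2) \<le> 2 * \<mu> * R"
proof -
  have "x1 - x2 = (x1 - xstar) - (x2 - xstar)" by simp
  hence "norm (x1 - x2) \<le> norm (x1 - xstar) + norm (x2 - xstar)"
    using norm_triangle_ineq4 by metis
  thus ?thesis using n1 n2 by simp
qed


lemma big_r:
  assumes ap: "approx_prox_step g \<omega> \<alpha> \<delta> x y"
    and bg: "\<omega> (norm (y - x)) * norm (y - x) > c * \<delta>"
  shows "norm (y - x) \<le> 2 * norm (x - xstar)"
proof -
  define u where "u = y - x"
  define r where "r = norm u"
  define w where "w = \<omega> r"
  define G where "G = grad g y"
  define e where "e = G + w *\<^sub>R u"
  define D where "D = norm (x - xstar)"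
  have ne: "norm e \<le> \<alpha> * w * r + \<delta>"
    using ap unfolding approx_prox_step_def e_def G_def w_def r_def u_def by simp
  have w0: "w \<ge> 0" unfolding w_def r_def using omega_nonneg by simp
  have bg': "w * r > c * \<delta>" using bg unfolding w_def r_def u_def .
  have cd: "c * \<delta> > 0" using c delta_pos by simp
  have wr: "w * r > 0" using bg' cd by linarith
  have rp: "r > 0" using wr w0 r_def by (metis mult_zero_right norm_ge_zero order.not_eq_order_implies_strict order_less_irrefl)
  have wp: "w > 0" using wr rp by (simp add: zero_less_mult_iff)
  have dl: "\<delta> < w * r / c" using bg' c by (simp add: field_simps)
  have "\<alpha> * w * r + \<delta> \<le> \<beta> * (w * r)" unfolding \<beta>_def using dl by (simp add: algebra_simps)
  hence neb: "norm e \<le> \<beta> * (w * r)" using ne by linarith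
  have "g xstar \<ge> g y + inner G (xstar - y)" unfolding G_def by (rule tang)
  hence t: "inner G (y - xstar) \<ge> 0" using minx
    by (smt (verit) inner_minus_right minus_diff_eq)
  have Ge: "G = e - w *\<^sub>R u" unfolding e_def by simp
  have yx: "y - xstar = u + (x - xstar)" unfolding u_def by simp
  have "inner G (y - xstar) = inner e (y - xstar) - w * inner u (y - xstar)"
    unfolding Ge by (simp add: inner_diff_left)
  moreover have "inner u (y - xstar) = r^2 + inner u (x - xstar)"
    unfolding yx r_def by (simp add: inner_add_right power2_norm_eq_inner)
  moreover have "inner u (x - xstar) \<ge> - (r * D)"
    using Cauchy_Schwarz_ineq2[of u "x - xstar"] unfolding r_def D_def by simp
  moreover have "inner e (y - xstar) \<le> norm e * (r + D)"
  proof -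
    have "inner e (y - xstar) \<le> norm e * norm (y - xstar)" by (rule norm_cauchy_schwarz)
    also have "norm (y - xstar) \<le> r + D" unfolding yx r_def D_def by (rule norm_triangle_ineq)
    hence "norm e * norm (y - xstar) \<le> norm e * (r + D)" by (simp add: mult_left_mono)
    finally show ?thesis .
  qed
  ultimately have "w * (r^2 - r * D) \<le> norm e * (r + D)"
    using t w0 by (smt (verit) mult_left_mono right_diff_distrib')
  also have "\<dots> \<le> \<beta> * (w * r) * (r + D)"
    using neb rp by (intro mult_right_mono) (auto simp: D_def)
  finally have "(w * r) * (r - D) \<le> (w * r) * (\<beta> * (r + D))"
    by (simp add: power2_eq_square algebra_simps)
  hence "r - D \<le> \<beta> * (r + D)" using wr mult_le_cancel_left_pos by blast
  moreover have "\<beta> * (r + D) \<le> (1/64) * (r + D)" using beta_bd rp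
    by (intro mult_right_mono) (auto simp: D_def)
  ultimately have "r - D \<le> (1/64) * r + (1/64) * D" by (simp add: ring_distribs)
  hence "r \<le> 2 * D" using norm_ge_zero[of "x - xstar"] unfolding D_def by linarith
  thus ?thesis unfolding r_def u_def D_def .
qed


lemma notbig_good:
  assumes l: "lam > 0" and ap: "approx_prox_step g \<omega> \<alpha> \<delta> (X lam) y"
    and nb: "\<omega> (norm (y - X lam)) * norm (y - X lam) \<le> c * \<delta>"
  shows "g y \<le> g xstar + \<epsilon>"
proof -
  define u where "u = y - X lam"
  define r where "r = norm u"
  define w where "w = \<omega> r"
  define G where "G = grad g y"
  define e where "e = G + w *\<^sub>R u"
  have ne: "norm e \<le> \<alpha> * w * r + \<delta>"
    using ap unfolding approx_prox_step_def e_def G_def w_def r_def u_def by simp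
  have w0: "w \<ge> 0" unfolding w_def r_def using omega_nonneg by simp
  have nb': "w * r \<le> c * \<delta>" using nb unfolding w_def r_def u_def .
  have r0: "r \<ge> 0" unfolding r_def by simp
  have R8: "8 * \<mu> * R > 0" using mu_pos R by simp
  have rle: "r \<le> 8 * c * \<mu> * R"
  proof (rule ccontr)
    assume "\<not> ?thesis"
    hence rg: "r > 8 * c * \<mu> * R" by simp
    have "8 * \<mu> * R * 1 \<le> 8 * \<mu> * R * c" using c R8 by (intro mult_left_mono) auto
    hence "8 * \<mu> * R \<le> 8 * c * \<mu> * R" by (simp add: algebra_simps)
    hence "\<omega> (8 * \<mu> * R) \<le> w" unfolding w_def using rg R8 by (intro om_mono) auto
    moreover have op: "\<omega> (8 * \<mu> * R) > 0" using R8 om_pos by simp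
    ultimately have "\<omega> (8 * \<mu> * R) * r \<le> w * r" using r0 by (simp add: mult_right_mono)
    moreover have "\<omega> (8 * \<mu> * R) * (8 * c * \<mu> * R) < \<omega> (8 * \<mu> * R) * r"
      using op rg by simp
    moreover have "c * \<delta> \<le> c * (8 * \<mu> * R * \<omega> (8 * \<mu> * R))"
      using delta2 c by simp
    ultimately show False using nb' by (simp add: algebra_simps)
  qed
  have "norm G \<le> norm e + norm (w *\<^sub>R u)"
    unfolding e_def by (metis add_diff_cancel norm_triangle_ineq4)
  also have "norm (w *\<^sub>R u) = w * r" using w0 unfolding r_def by simp
  finally have "norm G \<le> (1 + \<alpha>) * (w * r) + \<delta>" using ne by (simp add: algebra_simps)
  also have "\<dots> \<le> (1 + \<alpha>) * (c * \<delta>) + \<delta>" using nb' alpha by (simp add: mult_left_mono)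
  finally have nG: "norm G \<le> ((1 + \<alpha>) * c + 1) * \<delta>" by (simp add: algebra_simps)
  have "norm (y - xstar) \<le> r + norm (X lam - xstar)"
  proof -
    have "y - xstar = u + (X lam - xstar)" unfolding u_def by simp
    thus ?thesis unfolding r_def by (metis norm_triangle_ineq)
  qed
  also have "\<dots> \<le> 8 * c * \<mu> * R + \<mu> * R" using rle Xs[OF l] by simp
  also have "\<dots> \<le> 9 * c * \<mu> * R" using c mu_pos R by (simp add: algebra_simps mult_le_cancel_right1)
  finally have ny: "norm (y - xstar) \<le> 9 * c * \<mu> * R" .
  have "g xstar \<ge> g y + inner G (xstar - y)" unfolding G_def by (rule tang)
  hence "g y - g xstar \<le> inner G (y - xstar)"
    by (smt (verit) inner_minus_right minus_diff_eq)
  also have "\<dots> \<le> norm G * norm (y - xstar)" by (rule norm_cauchy_schwarz)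
  also have "\<dots> \<le> (((1 + \<alpha>) * c + 1) * \<delta>) * (9 * c * \<mu> * R)"
    using nG ny alpha c delta_pos by (intro mult_mono) auto
  also have "\<dots> \<le> \<epsilon>"
  proof -
    have "(1 + \<alpha>) * c \<ge> 0" using c alpha by simp
    hence p1: "(1 + \<alpha>) * c + 1 > 0" by linarith
    have pos: "9 * \<mu> * R * c * ((1 + \<alpha>) * c + 1) > 0" using mu_pos R c p1
      by (intro mult_pos_pos) auto
    have "\<delta> * (9 * \<mu> * R * c * ((1 + \<alpha>) * c + 1)) \<le> \<epsilon>"
      using delta1 pos by (simp add: le_divide_eq)
    thus ?thesis by (simp add: algebra_simps)
  qed
  finally show ?thesis by simp
qed


lemma e_bound:
  assumes ap: "approx_prox_step g \<omega> \<alpha> \<delta> x y"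
    and bg: "\<omega> (norm (y - x)) * norm (y - x) > c * \<delta>"
  shows "norm (grad g y + \<omega> (norm (y - x)) *\<^sub>R (y - x)) \<le> \<beta> * (\<omega> (norm (y - x)) * norm (y - x))"
proof -
  define w where "w = \<omega> (norm (y - x))"
  define r where "r = norm (y - x)"
  have ne: "norm (grad g y + w *\<^sub>R (y - x)) \<le> \<alpha> * w * r + \<delta>"
    using ap unfolding approx_prox_step_def w_def r_def by simp
  have dl: "\<delta> < w * r / c" using bg c unfolding w_def r_def by (simp add: field_simps)
  have "\<alpha> * w * r + \<delta> \<le> \<beta> * (w * r)" unfolding \<beta>_def using dl by (simp add: algebra_simps)
  thus ?thesis using ne unfolding w_def r_def by linarith
qed

lemma mono_ineq:
  assumes apl: "approx_prox_step g \<omega> \<alpha> \<delta> xl yl"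
    and bgl: "\<omega> (norm (yl - xl)) * norm (yl - xl) > c * \<delta>"
    and aph: "approx_prox_step g \<omega> \<alpha> \<delta> xh yh"
    and bgh: "\<omega> (norm (yh - xh)) * norm (yh - xh) > c * \<delta>"
  shows "(norm (yh - xh) - norm (yl - xl)) * (\<omega> (norm (yh - xh)) * norm (yh - xh) - \<omega> (norm (yl - xl)) * norm (yl - xl))
    \<le> (\<omega> (norm (yl - xl)) * norm (yl - xl) + \<omega> (norm (yh - xh)) * norm (yh - xh)) *
       (\<beta> * (norm (yl - xl) + norm (yh - xh)) + (1 + \<beta>) * norm (xl - xh))"
proof -
  define ul where "ul = yl - xl"
  define uh where "uh = yh - xh"
  define rl where "rl = norm ul"
  define rh where "rh = norm uh"
  define wl where "wl = \<omega> rl"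
  define wh where "wh = \<omega> rh"
  define hl where "hl = wl * rl"
  define hh where "hh = wh * rh"
  define el where "el = grad g yl + wl *\<^sub>R ul"
  define eh where "eh = grad g yh + wh *\<^sub>R uh"
  define d where "d = xl - xh"
  have nel: "norm el \<le> \<beta> * hl" using e_bound[OF apl bgl]
    unfolding el_def hl_def wl_def rl_def ul_def .
  have neh: "norm eh \<le> \<beta> * hh" using e_bound[OF aph bgh]
    unfolding eh_def hh_def wh_def rh_def uh_def .
  have wl0: "wl \<ge> 0" unfolding wl_def rl_def using omega_nonneg by simp
  have wh0: "wh \<ge> 0" unfolding wh_def rh_def using omega_nonneg by simp
  have hl0: "hl \<ge> 0" unfolding hl_def rl_def using wl0 by simp
  have hh0: "hh \<ge> 0" unfolding hh_def rh_def using wh0 by simp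
  have b0: "\<beta> \<ge> 0" using beta_bd by simp
  have t1: "g yh \<ge> g yl + inner (grad g yl) (yh - yl)" by (rule tang)
  have t2: "g yl \<ge> g yh + inner (grad g yh) (yl - yh)" by (rule tang)
  have "inner (grad g yl) (yh - yl) = - inner (grad g yl) (yl - yh)"
    by (metis inner_minus_right minus_diff_eq)
  hence mono: "inner (grad g yl - grad g yh) (yl - yh) \<ge> 0"
    using t1 t2 by (simp add: inner_diff_left)
  define P where "P = wl *\<^sub>R ul - wh *\<^sub>R uh"
  have G: "grad g yl - grad g yh = (el - eh) - P" unfolding el_def eh_def P_def by simp
  have Y: "yl - yh = (ul - uh) + d" unfolding ul_def uh_def d_def by simp
  have split: "inner (grad g yl - grad g yh) (yl - yh) = inner (el - eh) (yl - yh) - inner P (ul - uh) - inner P d"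
    unfolding G Y by (simp add: inner_diff_left inner_add_right)
  have iP: "inner P (ul - uh) = wl * rl^2 + wh * rh^2 - (wl + wh) * inner ul uh"
    unfolding P_def rl_def rh_def
    by (simp add: inner_diff_left inner_diff_right power2_norm_eq_inner inner_commute algebra_simps)
  have "inner ul uh \<le> rl * rh" unfolding rl_def rh_def by (rule norm_cauchy_schwarz)
  hence "(wl + wh) * inner ul uh \<le> (wl + wh) * (rl * rh)" using wl0 wh0 by (intro mult_left_mono) auto
  hence L: "inner P (ul - uh) \<ge> (rh - rl) * (hh - hl)"
    unfolding iP hl_def hh_def by (simp add: power2_eq_square algebra_simps)
  have nY: "norm (yl - yh) \<le> rl + rh + norm d"
  proof -
    have "norm (yl - yh) \<le> norm (ul - uh) + norm d" unfolding Y by (rule norm_triangle_ineq)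
    moreover have "norm (ul - uh) \<le> rl + rh" unfolding rl_def rh_def by (rule norm_triangle_ineq4)
    ultimately show ?thesis by simp
  qed
  have "inner (el - eh) (yl - yh) \<le> norm (el - eh) * norm (yl - yh)" by (rule norm_cauchy_schwarz)
  also have "\<dots> \<le> (\<beta> * hl + \<beta> * hh) * (rl + rh + norm d)"
  proof (rule mult_mono)
    show "norm (el - eh) \<le> \<beta> * hl + \<beta> * hh" using nel neh norm_triangle_ineq4[of el eh] by simp
  qed (use nY b0 hl0 hh0 in auto)
  finally have E1: "inner (el - eh) (yl - yh) \<le> (\<beta> * hl + \<beta> * hh) * (rl + rh + norm d)" .
  have nP: "norm P \<le> hl + hh"
  proof -
    have "norm P \<le> norm (wl *\<^sub>R ul) + norm (wh *\<^sub>R uh)" unfolding P_def by (rule norm_triangle_ineq4)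
    thus ?thesis using wl0 wh0 unfolding hl_def hh_def rl_def rh_def by simp
  qed
  have "- inner P d \<le> norm P * norm d" using norm_cauchy_schwarz[of "-P" d] by simp
  also have "\<dots> \<le> (hl + hh) * norm d" using nP by (simp add: mult_right_mono)
  finally have E2: "- inner P d \<le> (hl + hh) * norm d" .
  have "(rh - rl) * (hh - hl) \<le> (\<beta> * hl + \<beta> * hh) * (rl + rh + norm d) + (hl + hh) * norm d"
    using mono split L E1 E2 by linarith
  also have "\<dots> = (hl + hh) * (\<beta> * (rl + rh) + (1 + \<beta>) * norm d)" by (simp add: algebra_simps)
  finally show ?thesis unfolding hl_def hh_def wl_def wh_def rl_def rh_def ul_def uh_def d_def .
qed

end


lemma scal1:
  fixes rl rh hl hh \<beta> \<eta> :: real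
  assumes rl: "rl > 0" and rh: "rh \<ge> rl" and hl: "hl > 0" and hr: "hh * rl \<ge> rh * hl"
    and b: "\<beta> \<ge> 0" and e: "\<eta> \<ge> 0"
    and I: "(rh - rl) * (hh - hl) \<le> (hl + hh) * (\<beta> * (rl + rh) + (1 + \<beta>) * (\<eta> * rl))"
  shows "(rh - rl)^2 \<le> (rh + rl)^2 * (\<beta> + (1 + \<beta>) * \<eta>)"
proof -
  have a: "(hh - hl) * (rh + rl) \<ge> (hh + hl) * (rh - rl)" using hr by (simp add: algebra_simps)
  have hh: "hh \<ge> hl" 
  proof -
    have "rh * hl \<ge> rl * hl" using rh hl by (simp add: mult_right_mono)
    hence "hh * rl \<ge> hl * rl" using hr by (simp add: algebra_simps)
    thus ?thesis using rl by simp
  qed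
  have "(rh - rl)^2 * (hh + hl) = (rh - rl) * ((hh + hl) * (rh - rl))" by (simp add: power2_eq_square algebra_simps)
  also have "\<dots> \<le> (rh - rl) * ((hh - hl) * (rh + rl))" using a rh by (intro mult_left_mono) auto
  also have "\<dots> = ((rh - rl) * (hh - hl)) * (rh + rl)" by (simp add: algebra_simps)
  also have "\<dots> \<le> ((hl + hh) * (\<beta> * (rl + rh) + (1 + \<beta>) * (\<eta> * rl))) * (rh + rl)"
    using I rl rh by (intro mult_right_mono) auto
  finally have "(rh - rl)^2 * (hh + hl) \<le> (hh + hl) * ((\<beta> * (rl + rh) + (1 + \<beta>) * (\<eta> * rl)) * (rh + rl))"
    by (simp add: algebra_simps)
  hence "(rh - rl)^2 \<le> (\<beta> * (rl + rh) + (1 + \<beta>) * (\<eta> * rl)) * (rh + rl)"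
    using hl hh by (simp add: mult.commute)
  also have "\<dots> \<le> (\<beta> * (rl + rh) + (1 + \<beta>) * (\<eta> * (rl + rh))) * (rh + rl)"
    using rl rh b e by (intro mult_right_mono add_mono mult_left_mono) auto
  also have "\<dots> = (rh + rl)^2 * (\<beta> + (1 + \<beta>) * \<eta>)" by (simp add: power2_eq_square algebra_simps)
  finally show ?thesis .
qed

lemma scal2:
  fixes rl rh S \<gamma> :: real
  assumes g: "\<gamma> \<ge> 1" and rl: "rl > 0" and rh: "rh \<ge> rl"
    and I: "(rh - rl)^2 \<le> (rh + rl)^2 * S" and S: "\<gamma>^2 * S \<le> 193/8192"
  shows "\<gamma> * (rh / rl - 1) \<le> (37/100)"
proof -
  define t where "t = rh / rl - 1"
  have "rh / rl \<ge> 1" using rl rh by (simp add: le_divide_eq)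
  hence t0: "t \<ge> 0" unfolding t_def by simp
  have rh_eq: "rh = (t + 1) * rl" unfolding t_def using rl by simp
  have e1: "rh - rl = t * rl" "rh + rl = (t + 2) * rl" unfolding rh_eq by (simp_all add: algebra_simps)
  have "(t * rl)^2 \<le> ((t + 2) * rl)^2 * S" using I unfolding e1 .
  hence "t^2 * rl^2 \<le> ((t + 2)^2 * S) * rl^2" by (simp only: power_mult_distrib ac_simps)
  hence tt: "t^2 \<le> (t + 2)^2 * S" using rl by simp
  define K where "K = \<gamma> * t"
  have K0: "K \<ge> 0" unfolding K_def using t0 g by simp
  have "1 * t \<le> \<gamma> * t" using t0 g by (intro mult_right_mono) auto
  hence tK: "t \<le> K" unfolding K_def by simp
  have S0: "S \<ge> 0"
  proof (rule ccontr)
    assume "\<not> S \<ge> 0"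
    hence "(t + 2)^2 * S < 0" using t0 by (intro mult_pos_neg) auto
    thus False using tt zero_le_power2[of t] by linarith
  qed
  have "K^2 = \<gamma>^2 * t^2" unfolding K_def by (simp add: power_mult_distrib)
  also have "\<dots> \<le> \<gamma>^2 * ((t + 2)^2 * S)" using tt by (intro mult_left_mono) auto
  also have "\<dots> = (\<gamma>^2 * S) * (t + 2)^2" by simp
  also have "\<dots> \<le> (193/8192) * (t + 2)^2" using S by (intro mult_right_mono) auto
  also have "\<dots> \<le> (193/8192) * (K + 2)^2" using tK t0 by (intro mult_left_mono power_mono) auto
  also have "\<dots> \<le> ((77/500) * (K + 2))^2" unfolding power_mult_distrib by (intro mult_right_mono) (auto simp: power2_eq_square)
  finally have "K^2 \<le> ((77/500) * (K + 2))^2" .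
  moreover have "0 \<le> (77/500) * (K + 2)" using K0 by simp
  ultimately have "K \<le> (77/500) * (K + 2)" by (rule power2_le_imp_le)
  hence "K \<le> 77/500 * K + 77/500 * 2" by (simp only: distrib_left)
  hence "K \<le> (37/100)" by linarith
  thus ?thesis unfolding K_def t_def .
qed

lemma exp_small: "0 \<le> (K::real) \<Longrightarrow> K \<le> (37/100) \<Longrightarrow> exp K \<le> (8/5)"
proof -
  assume k: "0 \<le> K" "K \<le> (37/100)"
  have "1 + (- K) \<le> exp (- K)" by (rule exp_ge_add_one_self)
  hence "(1 - K) * exp K \<le> exp (- K) * exp K" by (intro mult_right_mono) auto
  hence "(1 - K) * exp K \<le> 1" by (simp add: exp_minus)
  moreover have "(63/100) * exp K \<le> (1 - K) * exp K" using k by (intro mult_right_mono) auto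
  ultimately have "(63/100) * exp K \<le> 1" by linarith
  thus ?thesis by simp
qed


context psetup begin

definition "s2 = sqrt \<omega>2"
definition "\<psi>0 = 2 * s2"
definition "\<psi>1 = sqrt (c * \<delta> / (2 * \<mu> * R))"
definition "\<kappa> = \<delta> / (7 * \<mu> * R * s2)"
definition "Lam (\<psi>::real) = 1 / \<psi>^2"

lemma s2_pos: "s2 > 0" and s2_sq: "s2^2 = \<omega>2"
  unfolding s2_def using om2_pos by auto

lemma psi1_pos: "\<psi>1 > 0" unfolding \<psi>1_def using c delta_pos mu_pos R by simp

lemma psi1_sq: "\<psi>1^2 = c * \<delta> / (2 * \<mu> * R)"
  unfolding \<psi>1_def using c delta_pos mu_pos R by simp

lemma kappa_pos: "\<kappa> > 0" unfolding \<kappa>_def using delta_pos mu_pos R s2_pos by simp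

lemma cdelta_small: "c * \<delta> \<le> 2 * R * \<omega>2 / (9 * \<mu>)"
proof -
  have "c * \<delta> \<le> c * (2 * R * \<omega>2 / (9 * \<mu> * c))" using delta_small c by (intro mult_left_mono) auto
  also have "\<dots> = 2 * R * \<omega>2 / (9 * \<mu>)" using c by simp
  finally show ?thesis .
qed

lemma kappa_small: "\<kappa> \<le> \<psi>1 / 10"
proof -
  have mR: "\<mu> * R > 0" using mu_pos R by simp
  have "\<kappa>^2 = \<delta> * \<delta> / (49 * (\<mu> * R)^2 * \<omega>2)"
    unfolding \<kappa>_def using s2_sq by (simp add: power2_eq_square field_simps)
  also have "\<dots> \<le> c * \<delta> / (200 * (\<mu> * R))"
  proof -
    have "\<delta> \<le> 2 * R * \<omega>2 / (9 * \<mu> * c)" by (rule delta_small)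
    hence d9: "9 * \<mu> * c * \<delta> \<le> 2 * R * \<omega>2" using mu_pos c by (simp add: le_divide_eq mult.commute)
    have "\<mu> * c \<ge> 8" using mu_ge c by (metis mult_mono' mult.right_neutral order_trans linorder_le_cases zero_le_numeral dual_order.trans mult_left_mono le_numeral_extra(4) mult_le_cancel_left1 order.refl) 
    hence "(\<mu> * c) * (\<mu> * c) \<ge> 8 * 8" by (intro mult_mono) auto
    hence "400 * (R * \<omega>2) \<le> 441 * ((\<mu> * c) * (\<mu> * c)) * (R * \<omega>2)"
      using R om2_pos by (intro mult_right_mono) auto
    moreover have "200 * (9 * \<mu> * c * \<delta>) \<le> 200 * (2 * R * \<omega>2)" using d9 by (intro mult_left_mono) auto
    ultimately have "(9 * \<mu> * c) * (200 * \<delta>) \<le> (9 * \<mu> * c) * (49 * \<mu> * R * \<omega>2 * c)"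
      by (simp add: algebra_simps)
    moreover have "9 * \<mu> * c > 0" using mu_pos c by simp
    ultimately have "200 * \<delta> \<le> 49 * \<mu> * R * \<omega>2 * c" using mult_le_cancel_left_pos by blast
    hence "(200 * \<delta>) * (\<delta> * (\<mu> * R)) \<le> (49 * \<mu> * R * \<omega>2 * c) * (\<delta> * (\<mu> * R))"
      using delta_pos mR by (intro mult_right_mono) auto
    hence key: "\<delta> * \<delta> * (200 * (\<mu> * R)) \<le> c * \<delta> * (49 * (\<mu> * R)^2 * \<omega>2)"
      by (simp add: power2_eq_square algebra_simps)
    have p1: "49 * (\<mu> * R)^2 * \<omega>2 > 0" using mR om2_pos by (intro mult_pos_pos) auto
    have p2: "200 * (\<mu> * R) > 0" using mR by simp
    have "\<delta> * \<delta> / (49 * (\<mu> * R)^2 * \<omega>2) = (\<delta> * \<delta> * (200 * (\<mu> * R))) / ((49 * (\<mu> * R)^2 * \<omega>2) * (200 * (\<mu> * R)))"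
      using p2 by simp
    also have "\<dots> \<le> (c * \<delta> * (49 * (\<mu> * R)^2 * \<omega>2)) / ((49 * (\<mu> * R)^2 * \<omega>2) * (200 * (\<mu> * R)))"
      using key by (rule divide_right_mono) (intro mult_nonneg_nonneg less_imp_le[OF p1] less_imp_le[OF p2])
    also have "\<dots> = c * \<delta> / (200 * (\<mu> * R))"
      using p1 by (subst mult.commute[of "49 * (\<mu> * R)^2 * \<omega>2"]) (rule nonzero_mult_divide_mult_cancel_right, use mu_pos R om2_pos in simp)
    finally show ?thesis .
  qed
  also have "\<dots> = (\<psi>1 / 10)^2" unfolding power_divide psi1_sq by (simp add: mult.assoc)
  finally have "\<kappa>^2 \<le> (\<psi>1 / 10)^2" .
  moreover have "0 \<le> \<psi>1 / 10" using psi1_pos by simp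
  ultimately show ?thesis by (rule power2_le_imp_le)
qed


lemma Lam_pos: "\<psi> > 0 \<Longrightarrow> Lam \<psi> > 0" unfolding Lam_def by simp

lemma ratio_bd:
  assumes "0 < \<psi>u" "\<psi>u \<le> \<psi>l" "\<psi>l - \<psi>u \<le> \<kappa>" "\<psi>1 \<le> \<psi>u"
  shows "\<psi>l \<le> (11/10) * \<psi>u"
  using assms kappa_small by linarith

lemma aof_lb2:
  assumes p: "\<psi> > 0"
  shows "aof (Lam \<psi>) \<ge> 2 / (3 * \<psi> * s2)"
proof -
  have l: "Lam \<psi> > 0" using Lam_pos p by simp
  have A2: "A \<ge> 1 / (2 * s2^2)" using A(1) s2_sq unfolding \<omega>2_def by simp
  have "(2 / (3 * \<psi> * s2))^2 = (4/9) * (1 / \<psi>^2) * (1 / s2^2)"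
    by (simp add: power_divide power_mult_distrib)
  also have "\<dots> \<le> (1 / \<psi>^2) * (1 / (2 * s2^2))"
    using p s2_pos by (simp add: divide_simps)
  also have "\<dots> \<le> Lam \<psi> * A" unfolding Lam_def using A2 p by (intro mult_left_mono) auto
  also have "\<dots> \<le> (aof (Lam \<psi>))^2" using aof_lb[OF l] .
  finally have "(2 / (3 * \<psi> * s2))^2 \<le> (aof (Lam \<psi>))^2" .
  moreover have "0 \<le> aof (Lam \<psi>)" using aof_pos[OF l] by simp
  ultimately show ?thesis by (rule power2_le_imp_le)
qed

lemma d_bound:
  assumes p: "0 < \<psi>u" "\<psi>u \<le> \<psi>l" "\<psi>l - \<psi>u \<le> \<kappa>" "\<psi>1 \<le> \<psi>u"
    and n12: "norm (x1 - x2) \<le> 2 * \<mu> * R"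
  shows "norm (X (Lam \<psi>l) - X (Lam \<psi>u)) \<le> \<delta> * Lam \<psi>l"
proof -
  define l where "l = Lam \<psi>l"
  define u where "u = Lam \<psi>u"
  have pl: "\<psi>l > 0" using p by simp
  have l0: "l > 0" unfolding l_def using Lam_pos pl by simp
  have u0: "u > 0" unfolding u_def using Lam_pos p by simp
  have lu: "l \<le> u" unfolding l_def u_def Lam_def using p
    by (intro divide_left_mono power_mono mult_pos_pos) auto
  have r11: "\<psi>l \<le> (11/10) * \<psi>u" using ratio_bd[OF p] .
  have a0: "aof l > 0" using aof_pos[OF l0] .
  have fd: "\<bar>fof l - fof u\<bar> \<le> (u - l) / aof l"
    using fof_diff[OF l0 lu] fof_mono[OF l0 lu] by simp
  have "u - l = l * ((\<psi>l - \<psi>u) * (\<psi>l + \<psi>u) / \<psi>u^2)"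
    unfolding l_def u_def Lam_def using p pl
    by (simp add: power2_eq_square divide_simps) (simp add: algebra_simps)
  also have "\<dots> \<le> l * (\<kappa> * ((21/10) * \<psi>u) / \<psi>u^2)"
    using p r11 l0 kappa_pos
    by (intro mult_left_mono divide_right_mono mult_mono) auto
  also have "\<dots> = l * \<kappa> * (21/10) / \<psi>u" using p by (simp add: power2_eq_square)
  finally have ul: "u - l \<le> l * \<kappa> * (21/10) / \<psi>u" .
  have "aof l \<ge> 2 / (3 * \<psi>l * s2)" unfolding l_def by (rule aof_lb2[OF pl])
  moreover have "2 / (3 * \<psi>l * s2) \<ge> 2 / (3 * ((11/10) * \<psi>u) * s2)"
    using r11 pl s2_pos by (intro divide_left_mono mult_right_mono mult_pos_pos) auto
  ultimately have al: "aof l \<ge> 20 / (33 * \<psi>u * s2)" by simp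
  have "(u - l) / aof l \<le> (l * \<kappa> * (21/10) / \<psi>u) / (20 / (33 * \<psi>u * s2))"
    using ul al lu a0 p s2_pos by (intro frac_le) auto
  also have "\<dots> = l * \<kappa> * s2 * (693/200)" using p s2_pos by (simp add: divide_simps)
  finally have q: "(u - l) / aof l \<le> l * \<kappa> * s2 * (693/200)" .
  have "norm (X l - X u) = \<bar>fof l - fof u\<bar> * norm (x1 - x2)" by (rule X_dist[OF l0 u0])
  also have "\<dots> \<le> (l * \<kappa> * s2 * (693/200)) * (2 * \<mu> * R)"
  proof (rule mult_mono[OF order_trans[OF fd q] n12])
    show "0 \<le> l * \<kappa> * s2 * (693/200)" using l0 kappa_pos s2_pos by simp
  qed simp
  also have "\<dots> = l * \<delta> * (99/100)" unfolding \<kappa>_def using mu_pos R s2_pos by (simp add: divide_simps)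
  also have "\<dots> \<le> \<delta> * l" using l0 delta_pos by simp
  finally show ?thesis unfolding l_def u_def .
qed

end

context gsetup begin

lemma gamma_S: "\<gamma>^2 * (\<beta> + (1 + \<beta>) * \<eta>) \<le> 193/8192"
proof -
  have g2: "\<gamma>^2 > 0" using gamma by simp
  have "\<gamma>^2 * ((1 + \<beta>) * \<eta>) = (1 + \<beta>) / 128" unfolding \<eta>_def using g2 by simp
  also have "\<dots> \<le> (65/64) / 128" using beta_bd by (intro divide_right_mono) auto
  finally have "\<gamma>^2 * ((1 + \<beta>) * \<eta>) \<le> 65/8192" by simp
  moreover have "\<gamma>^2 * \<beta> \<le> 1/64" using beta_bd by (simp add: mult.commute)
  ultimately show ?thesis by (simp add: distrib_left)
qed

lemma nojump:
  assumes p: "0 < \<psi>u" "\<psi>u \<le> \<psi>l" "\<psi>l - \<psi>u \<le> \<kappa>" "\<psi>1 \<le> \<psi>u"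
    and apl: "approx_prox_step g \<omega> \<alpha> \<delta> (X (Lam \<psi>l)) yl" and lowl: "Low (Lam \<psi>l) yl"
    and aph: "approx_prox_step g \<omega> \<alpha> \<delta> (X (Lam \<psi>u)) yh" and highh: "High (Lam \<psi>u) yh"
  shows False
proof -
  define l where "l = Lam \<psi>l"
  define u where "u = Lam \<psi>u"
  define rl where "rl = norm (yl - X l)"
  define rh where "rh = norm (yh - X u)"
  define wl where "wl = \<omega> rl"
  define wh where "wh = \<omega> rh"
  have pl: "\<psi>l > 0" using p by simp
  have l0: "l > 0" unfolding l_def using Lam_pos pl by simp
  have u0: "u > 0" unfolding u_def using Lam_pos p by simp
  have bl: "wl * rl > c * \<delta>" and ll: "l * wl < 1/2"
    using lowl unfolding Low_def big_def rr_def wl_def rl_def l_def by auto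
  have bh: "wh * rh > c * \<delta>" and hh1: "u * wh > 1"
    using highh unfolding High_def big_def rr_def wh_def rh_def u_def by auto
  have cd: "c * \<delta> > 0" using c delta_pos by simp
  have wl0: "wl \<ge> 0" unfolding wl_def rl_def using omega_nonneg by simp
  have wh0: "wh \<ge> 0" unfolding wh_def rh_def using omega_nonneg by simp
  have rl0: "rl \<ge> 0" unfolding rl_def by simp
  have "\<psi>l^2 \<le> ((11/10) * \<psi>u)^2" using ratio_bd[OF p] pl by (intro power_mono) auto
  also have "((11/10) * \<psi>u)^2 = (121/100) * \<psi>u^2" by (simp add: power2_eq_square)
  finally have "\<psi>l^2 \<le> (121/100) * \<psi>u^2" .
  hence ul: "u \<le> (121/100) * l" unfolding u_def l_def Lam_def using p pl
    by (simp add: divide_simps)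
  have "u * wl \<le> ((121/100) * l) * wl" using ul wl0 by (rule mult_right_mono)
  hence ulw: "u * wl \<le> (121/100) * (l * wl)" by (simp only: mult.assoc)
  show False
  proof (cases "rh \<le> rl")
    case True
    hence "wh \<le> wl" unfolding wh_def wl_def rh_def by (intro om_mono) auto
    hence "u * wh \<le> u * wl" using u0 by (simp add: mult_left_mono)
    thus False using ulw ll hh1 by linarith
  next
    case False
    hence rlh: "rl < rh" by simp
    have rlp: "rl > 0"
    proof (rule ccontr)
      assume "\<not> rl > 0" hence "rl = 0" using rl0 by simp
      thus False using bl cd by simp
    qed
    have wlp: "wl > 0" unfolding wl_def using om_pos rlp by simp
    have wlh: "wl \<le> wh" unfolding wl_def wh_def using rlh rl0 by (intro om_mono) auto
    have r2: "rl > 2 * c * \<delta> * l"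
    proof -
      have "c * \<delta> < wl * rl" by (rule bl)
      also have "\<dots> < (1 / (2 * l)) * rl" using ll rlp l0 by (intro mult_strict_right_mono) (auto simp: field_simps)
      finally show ?thesis using l0 by (simp add: field_simps)
    qed
    have dd: "norm (X l - X u) \<le> \<delta> * l"
      unfolding l_def u_def by (rule d_bound[OF p n12])
    have "(1/2) * (2 * \<delta> * l) \<le> (\<eta> * c) * (2 * \<delta> * l)" using eta_c delta_pos l0
      by (intro mult_right_mono) auto
    hence "\<delta> * l \<le> (\<eta> * c) * (2 * \<delta> * l)" by simp
    also have "\<dots> = \<eta> * (2 * c * \<delta> * l)" by (simp add: algebra_simps)
    also have "\<dots> \<le> \<eta> * rl" using r2 unfolding \<eta>_def by (intro mult_left_mono) auto
    finally have dn: "norm (X l - X u) \<le> \<eta> * rl" using dd by simp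
    have apl': "approx_prox_step g \<omega> \<alpha> \<delta> (X l) yl" using apl unfolding l_def .
    have aph': "approx_prox_step g \<omega> \<alpha> \<delta> (X u) yh" using aph unfolding u_def .
    have MI: "(rh - rl) * (wh * rh - wl * rl) \<le> (wl * rl + wh * rh) * (\<beta> * (rl + rh) + (1 + \<beta>) * norm (X l - X u))"
      using mono_ineq[OF apl' _ aph'] bl bh unfolding rl_def rh_def wl_def wh_def by blast
    have b0: "\<beta> \<ge> 0" using beta_bd by simp
    have e0: "\<eta> \<ge> 0" unfolding \<eta>_def by simp
    have "(wl * rl + wh * rh) * (\<beta> * (rl + rh) + (1 + \<beta>) * norm (X l - X u))
        \<le> (wl * rl + wh * rh) * (\<beta> * (rl + rh) + (1 + \<beta>) * (\<eta> * rl))"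
      using dn b0 wl0 wh0 rl0 rlh by (intro mult_left_mono add_mono) auto
    with MI have MI2: "(rh - rl) * (wh * rh - wl * rl) \<le> (wl * rl + wh * rh) * (\<beta> * (rl + rh) + (1 + \<beta>) * (\<eta> * rl))"
      by linarith
    have "(rh * rl) * wl \<le> (rh * rl) * wh" using wlh rl0 rlh by (intro mult_left_mono) auto
    hence hr: "(wh * rh) * rl \<ge> rh * (wl * rl)" by (simp only: ac_simps)
    have S1: "(rh - rl)^2 \<le> (rh + rl)^2 * (\<beta> + (1 + \<beta>) * \<eta>)"
      by (rule scal1[OF rlp _ _ hr b0 e0 MI2]) (use rlh wlp rlp in auto)
    have K: "\<gamma> * (rh / rl - 1) \<le> 37/100"
      by (rule scal2[OF gamma rlp _ S1 gamma_S]) (use rlh in auto)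
    have K0: "\<gamma> * (rh / rl - 1) \<ge> 0" using gamma rlh rlp by (simp add: field_simps)
    have "wh \<le> wl * exp (\<gamma> * (rh / rl - 1))" unfolding wh_def wl_def
      by (rule om_growth[OF rlp]) (use rlh in auto)
    also have "\<dots> \<le> wl * (8/5)" using exp_small[OF K0 K] wl0 by (intro mult_left_mono) auto
    finally have "u * wh \<le> u * (wl * (8/5))" using u0 by (intro mult_left_mono) auto
    also have "\<dots> = (8/5) * (u * wl)" by simp
    also have "\<dots> \<le> (8/5) * ((121/100) * (l * wl))" using ulw by (intro mult_left_mono) auto
    finally show False using ll hh1 by linarith
  qed
qed


definition "good y lam \<longleftrightarrow> lam > 0 \<and>
          (let a = (lam + sqrt (lam^2 + 4 * lam * A)) / 2;
               xt = (a / (A + a)) *\<^sub>R x1 + (A / (A + a)) *\<^sub>R x2;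
               r = norm (y - xt)
           in (g y \<le> g xstar + \<epsilon> \<and> \<omega> r * r \<le> c * \<delta>)
              \<or> (1/2 \<le> lam * \<omega> r \<and> lam * \<omega> r \<le> 1 \<and> \<omega> r * r > c * \<delta> \<and>
                 norm (grad g y + \<omega> r *\<^sub>R (y - xt)) \<le> \<alpha> * \<omega> r * r + \<delta>))"

lemma good_alt: "good y lam \<longleftrightarrow> lam > 0 \<and>
   ((g y \<le> g xstar + \<epsilon> \<and> \<omega> (norm (y - X lam)) * norm (y - X lam) \<le> c * \<delta>)
    \<or> (1/2 \<le> lam * \<omega> (norm (y - X lam)) \<and> lam * \<omega> (norm (y - X lam)) \<le> 1 \<and>
        \<omega> (norm (y - X lam)) * norm (y - X lam) > c * \<delta> \<and>
        norm (grad g y + \<omega> (norm (y - X lam)) *\<^sub>R (y - X lam)) \<le> \<alpha> * \<omega> (norm (y - X lam)) * norm (y - X lam) + \<delta>))"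
  unfolding good_def Let_def aof_def[symmetric] X_def[symmetric] ..

lemma done_good:
  assumes l: "lam > 0" and ap: "approx_prox_step g \<omega> \<alpha> \<delta> (X lam) y" and dn: "Done lam y"
  shows "good y lam"
proof (cases "big lam y")
  case False
  hence nb: "\<omega> (norm (y - X lam)) * norm (y - X lam) \<le> c * \<delta>" unfolding big_def rr_def by simp
  show ?thesis unfolding good_alt using l nb notbig_good[OF l ap nb] by simp
next
  case True
  hence "1/2 \<le> lam * \<omega> (rr lam y) \<and> lam * \<omega> (rr lam y) \<le> 1" using dn unfolding Done_def by simp
  thus ?thesis unfolding good_alt using l True ap unfolding big_def rr_def approx_prox_step_def by simp
qed

lemma Lam0: "Lam \<psi>0 = 1 / (4 * \<omega>2)"
  unfolding Lam_def \<psi>0_def using s2_sq by (simp add: power_mult_distrib)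

lemma Lam1: "Lam \<psi>1 = 2 * \<mu> * R / (c * \<delta>)"
  unfolding Lam_def psi1_sq by simp

lemma high_min:
  assumes ap: "approx_prox_step g \<omega> \<alpha> \<delta> (X (Lam \<psi>0)) y" and b: "big (Lam \<psi>0) y"
  shows "Lam \<psi>0 * \<omega> (rr (Lam \<psi>0) y) < 1/2"
proof -
  have l: "Lam \<psi>0 > 0" unfolding Lam0 using om2_pos by simp
  have "rr (Lam \<psi>0) y \<le> 2 * norm (X (Lam \<psi>0) - xstar)"
    using big_r[OF ap] b unfolding big_def rr_def by blast
  also have "\<dots> \<le> 2 * (\<mu> * R)" using Xs[OF l] by simp
  finally have "\<omega> (rr (Lam \<psi>0) y) \<le> \<omega>2" unfolding \<omega>2_def by (intro om_mono) (auto simp: rr_def)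
  hence "Lam \<psi>0 * \<omega> (rr (Lam \<psi>0) y) \<le> Lam \<psi>0 * \<omega>2" using l by (intro mult_left_mono) auto
  also have "\<dots> = 1/4" unfolding Lam0 using om2_pos by simp
  finally show ?thesis by simp
qed

lemma low_max:
  assumes ap: "approx_prox_step g \<omega> \<alpha> \<delta> (X (Lam \<psi>1)) y" and b: "big (Lam \<psi>1) y"
  shows "Lam \<psi>1 * \<omega> (rr (Lam \<psi>1) y) > 1"
proof -
  define r where "r = rr (Lam \<psi>1) y"
  have l: "Lam \<psi>1 > 0" using Lam_pos psi1_pos by simp
  have rle: "r \<le> 2 * (\<mu> * R)"
  proof -
    have "r \<le> 2 * norm (X (Lam \<psi>1) - xstar)"
      using big_r[OF ap] b unfolding big_def rr_def r_def by blast
    also have "\<dots> \<le> 2 * (\<mu> * R)" using Xs[OF l] by simp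
    finally show ?thesis .
  qed
  have bb: "\<omega> r * r > c * \<delta>" using b unfolding big_def r_def .
  have w0: "\<omega> r \<ge> 0" using omega_nonneg unfolding r_def rr_def by simp
  have "\<omega> r * r \<le> \<omega> r * (2 * (\<mu> * R))" using rle w0 by (intro mult_left_mono)
  hence "c * \<delta> < \<omega> r * (2 * \<mu> * R)" using bb by simp
  hence "c * \<delta> / (c * \<delta>) < \<omega> r * (2 * \<mu> * R) / (c * \<delta>)"
    using c delta_pos by (intro divide_strict_right_mono) auto
  hence "1 < \<omega> r * (2 * \<mu> * R) / (c * \<delta>)" using c delta_pos by simp
  thus ?thesis unfolding Lam1 r_def by (simp add: mult.commute)
qed

end

context psetup begin
lemma psi_order: "\<psi>1 < \<psi>0"
proof -
  have "\<psi>1^2 \<le> (2 * R * \<omega>2 / (9 * \<mu>)) / (2 * \<mu> * R)"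
    unfolding psi1_sq using cdelta_small mu_pos R by (intro divide_right_mono) auto
  also have "\<dots> = \<omega>2 / (9 * \<mu>^2)" using mu_pos R by (simp add: power2_eq_square)
  also have "\<dots> \<le> \<omega>2 / 1"
  proof -
    have "(8::real) * 8 \<le> \<mu> * \<mu>" using mu_ge by (intro mult_mono) auto
    hence "1 \<le> 9 * \<mu>^2" by (simp add: power2_eq_square)
    thus ?thesis using om2_pos by (intro divide_left_mono) auto
  qed
  also have "\<dots> < \<psi>0^2" unfolding \<psi>0_def using s2_sq om2_pos by (simp add: power_mult_distrib)
  finally have "\<psi>1^2 < \<psi>0^2" .
  moreover have "0 \<le> \<psi>0" using s2_pos unfolding \<psi>0_def by simp
  ultimately show ?thesis by (rule power_less_imp_less_base)
qed

end


context psetup begin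

definition qpsi :: "real \<times> real \<times> nat \<Rightarrow> real" where
  "qpsi s = (case s of (pu, pl, ph) \<Rightarrow> if ph = 0 then pl else if ph = 1 then pu else (pu + pl) / 2)"

definition step :: "real \<times> real \<times> nat \<Rightarrow> 'a \<Rightarrow> (real \<times> real \<times> nat) + ('a \<times> real)" where
  "step s y = (case s of (pu, pl, ph) \<Rightarrow>
     (let lam = Lam (qpsi s) in
      if Done lam y then Inr (y, lam)
      else if ph = 0 then (if Low lam y then Inl (pu, pl, 1) else Inr (y, lam))
      else if ph = 1 then (if High lam y then Inl (pu, pl, 2) else Inr (y, lam))
      else if Low lam y then Inl (pu, qpsi s, 2) else Inl (qpsi s, pl, 2)))"

primrec run :: "real \<times> real \<times> nat \<Rightarrow> 'a list \<Rightarrow> (real \<times> real \<times> nat) + ('a \<times> real)" where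
  "run s [] = Inl s"
| "run s (y # ys) = (case step s y of Inl s' \<Rightarrow> run s' ys | Inr out \<Rightarrow> Inr out)"

lemma run_snoc: "run s (ys @ [y]) = (case run s ys of Inl s' \<Rightarrow> step s' y | Inr out \<Rightarrow> Inr out)"
  by (induction ys arbitrary: s) (auto split: sum.splits)

definition "s0 = (\<psi>1, \<psi>0, 0::nat)"

definition alg :: "('a \<times> 'a) list \<Rightarrow> 'a + ('a \<times> real)" where
  "alg h = (case run s0 (map snd h) of Inl s \<Rightarrow> Inl (X (Lam (qpsi s))) | Inr out \<Rightarrow> Inr out)"

lemma alg_eq: "alg h = (case run s0 (map snd h) of Inl s \<Rightarrow> Inl (X (Lam (qpsi s))) | Inr out \<Rightarrow> Inr out)"
  unfolding alg_def by simp

definition "W0 = \<psi>0 - \<psi>1"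
definition "nn = nat \<lceil>log 2 (W0 / \<kappa>)\<rceil>"

lemma nn_bound: "W0 / 2 ^ nn \<le> \<kappa>"
proof -
  have W: "W0 > 0" unfolding W0_def using psi_order by simp
  have q: "W0 / \<kappa> > 0" using W kappa_pos by simp
  have "log 2 (W0 / \<kappa>) \<le> real nn" unfolding nn_def by linarith
  hence "2 powr log 2 (W0 / \<kappa>) \<le> 2 powr real nn" by simp
  hence "W0 / \<kappa> \<le> 2 ^ nn" using q by (simp add: powr_realpow)
  thus ?thesis using kappa_pos by (simp add: divide_le_eq mult.commute)
qed

end


context gsetup begin

abbreviation "ap lam y \<equiv> approx_prox_step g \<omega> \<alpha> \<delta> (X lam) y"

definition Q :: "nat \<Rightarrow> real \<times> real \<times> nat \<Rightarrow> bool" where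
  "Q j s = (case s of (pu, pl, ph) \<Rightarrow>
     (ph = 0 \<and> j = 0 \<and> pu = \<psi>1 \<and> pl = \<psi>0) \<or>
     (ph = 1 \<and> j = 1 \<and> pu = \<psi>1 \<and> pl = \<psi>0 \<and> (\<exists>yl. ap (Lam pl) yl \<and> Low (Lam pl) yl)) \<or>
     (ph = 2 \<and> j \<ge> 2 \<and> \<psi>1 \<le> pu \<and> pu \<le> pl \<and> pl - pu \<le> W0 / 2 ^ (j - 2) \<and>
        (\<exists>yl. ap (Lam pl) yl \<and> Low (Lam pl) yl) \<and> (\<exists>yh. ap (Lam pu) yh \<and> High (Lam pu) yh)))"

lemma Q_qpsi: "Q j s \<Longrightarrow> qpsi s \<ge> \<psi>1"
  unfolding Q_def qpsi_def using psi_order by (auto split: prod.splits)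

lemma step_Q:
  assumes q: "Q j s" and y: "ap (Lam (qpsi s)) y"
  shows "case step s y of Inl s' \<Rightarrow> Q (Suc j) s' | Inr out \<Rightarrow> good (fst out) (snd out)"
proof -
  obtain pu pl ph where s: "s = (pu, pl, ph)" by (cases s) auto
  define lam where "lam = Lam (qpsi s)"
  have lp: "lam > 0" unfolding lam_def using Q_qpsi[OF q] psi1_pos Lam_pos by simp
  have y': "ap lam y" using y unfolding lam_def .
  have nd_cases: "\<not> Done lam y \<Longrightarrow> big lam y \<and> (Low lam y \<or> High lam y)"
    unfolding Done_def Low_def High_def by auto
  show ?thesis
  proof (cases "Done lam y")
    case True
    hence "step s y = Inr (y, lam)" unfolding step_def s lam_def[unfolded s] by (simp add: Let_def)
    thus ?thesis using done_good[OF lp y' True] by simp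
  next
    case nd: False
    have qq: "(ph = 0 \<and> j = 0 \<and> pu = \<psi>1 \<and> pl = \<psi>0) \<or>
     (ph = 1 \<and> j = 1 \<and> pu = \<psi>1 \<and> pl = \<psi>0 \<and> (\<exists>yl. ap (Lam pl) yl \<and> Low (Lam pl) yl)) \<or>
     (ph = 2 \<and> j \<ge> 2 \<and> \<psi>1 \<le> pu \<and> pu \<le> pl \<and> pl - pu \<le> W0 / 2 ^ (j - 2) \<and>
        (\<exists>yl. ap (Lam pl) yl \<and> Low (Lam pl) yl) \<and> (\<exists>yh. ap (Lam pu) yh \<and> High (Lam pu) yh))"
      using q unfolding Q_def s by simp
    from qq show ?thesis
    proof (elim disjE conjE)
      assume ph: "ph = 0" and j: "j = 0" and pu: "pu = \<psi>1" and pl: "pl = \<psi>0"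
      have lam0: "lam = Lam \<psi>0" unfolding lam_def s qpsi_def ph pl by simp
      have nh: "\<not> High lam y"
        using high_min[of y] y' nd_cases[OF nd] unfolding lam0 High_def by force
      hence low: "Low lam y" using nd_cases[OF nd] by simp
      have "step s y = Inl (pu, pl, 1)" unfolding step_def s lam_def[unfolded s, symmetric]
        using nd ph low by (simp add: Let_def)
      moreover have "Q (Suc j) (pu, pl, 1)" unfolding Q_def using j pu pl low y' lam0 by auto
      ultimately show ?thesis by simp
    next
      assume ph: "ph = 1" and j: "j = 1" and pu: "pu = \<psi>1" and pl: "pl = \<psi>0"
        and wl: "\<exists>yl. ap (Lam pl) yl \<and> Low (Lam pl) yl"
      have lam1: "lam = Lam \<psi>1" unfolding lam_def s qpsi_def ph pu by simp
      have nl: "\<not> Low lam y"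
        using low_max[of y] y' nd_cases[OF nd] unfolding lam1 Low_def by force
      hence hi: "High lam y" using nd_cases[OF nd] by simp
      have "step s y = Inl (pu, pl, 2)" unfolding step_def s lam_def[unfolded s, symmetric]
        using nd ph hi by (simp add: Let_def)
      moreover have "Q (Suc j) (pu, pl, 2)" unfolding Q_def using j pu pl hi y' lam1 wl psi_order
        by (auto simp: W0_def)
      ultimately show ?thesis by simp
    next
      assume ph: "ph = 2" and j: "j \<ge> 2" and p1: "\<psi>1 \<le> pu" and p2: "pu \<le> pl"
        and w: "pl - pu \<le> W0 / 2 ^ (j - 2)"
        and wl: "\<exists>yl. ap (Lam pl) yl \<and> Low (Lam pl) yl"
        and wh: "\<exists>yh. ap (Lam pu) yh \<and> High (Lam pu) yh"
      define m where "m = (pu + pl) / 2"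
      have qm: "qpsi s = m" unfolding qpsi_def s m_def ph by simp
      have lamm: "lam = Lam m" unfolding lam_def qm ..
      have jj: "Suc j - 2 = Suc (j - 2)" using j by simp
      have w2: "(pl - pu) / 2 \<le> W0 / 2 ^ (Suc j - 2)" unfolding jj using w by (simp add: divide_right_mono)
      show ?thesis
      proof (cases "Low lam y")
        case low: True
        have "step s y = Inl (pu, m, 2)" unfolding step_def s lam_def[unfolded s, symmetric]
          using nd ph low qm[unfolded s] by (simp add: Let_def)
        moreover have "Q (Suc j) (pu, m, 2)" unfolding Q_def using j p1 p2 wh w2 low y' lamm
          by (auto simp: m_def field_simps)
        ultimately show ?thesis by simp
      next
        case nl: False
        hence hi: "High lam y" using nd_cases[OF nd] by simp
        have "step s y = Inl (m, pl, 2)" unfolding step_def s lam_def[unfolded s, symmetric]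
          using nd ph nl qm[unfolded s] by (simp add: Let_def)
        moreover have "Q (Suc j) (m, pl, 2)" unfolding Q_def using j p1 p2 wl w2 hi y' lamm
          by (auto simp: m_def field_simps)
        ultimately show ?thesis by simp
      qed
    qed
  qed
qed

lemma Q_bound: "Q j s \<Longrightarrow> j < nn + 2"
proof -
  assume q: "Q j s"
  obtain pu pl ph where s: "s = (pu, pl, ph)" by (cases s) auto
  show ?thesis
  proof (rule ccontr)
    assume "\<not> j < nn + 2"
    hence j: "j \<ge> nn + 2" by simp
    hence ph: "ph = 2" and p1: "\<psi>1 \<le> pu" and p2: "pu \<le> pl" and w: "pl - pu \<le> W0 / 2 ^ (j - 2)"
      and wl: "\<exists>yl. ap (Lam pl) yl \<and> Low (Lam pl) yl"
      and wh: "\<exists>yh. ap (Lam pu) yh \<and> High (Lam pu) yh"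
      using q unfolding Q_def s by auto
    have W: "W0 \<ge> 0" unfolding W0_def using psi_order by simp
    have "(2::real) ^ nn \<le> 2 ^ (j - 2)" using j by (intro power_increasing) auto
    hence "W0 / 2 ^ (j - 2) \<le> W0 / 2 ^ nn" using W by (intro divide_left_mono) auto
    hence "pl - pu \<le> \<kappa>" using w nn_bound by linarith
    moreover have "0 < pu" using p1 psi1_pos by simp
    ultimately show False using nojump[OF _ p2 _ p1] wl wh by blast
  qed
qed

end


context gsetup begin

lemma S_inv:
  assumes orc: "is_approx_prox_oracle g \<omega> \<alpha> \<delta> Orc"
  shows "(\<forall>s. run s0 (map snd (hist alg Orc j)) = Inl s \<longrightarrow> Q j s) \<and>
         (\<forall>out. run s0 (map snd (hist alg Orc j)) = Inr out \<longrightarrow> good (fst out) (snd out))"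
proof (induction j)
  case 0
  show ?case unfolding s0_def Q_def by simp
next
  case (Suc j)
  show ?case
  proof (cases "run s0 (map snd (hist alg Orc j))")
    case (Inl s)
    define x where "x = X (Lam (qpsi s))"
    define y where "y = Orc (hist alg Orc j) x"
    have a: "alg (hist alg Orc j) = Inl x" unfolding alg_eq[of "hist alg Orc _"] x_def using Inl by simp
    have H: "hist alg Orc (Suc j) = hist alg Orc j @ [(x, y)]" using a unfolding y_def by simp
    have S: "run s0 (map snd (hist alg Orc (Suc j))) = step s y" unfolding H using Inl by (simp add: run_snoc)
    have yap: "ap (Lam (qpsi s)) y" using orc unfolding is_approx_prox_oracle_def y_def x_def by blast
    have qs: "Q j s" using Suc.IH Inl by blast
    have st: "case step s y of Inl s' \<Rightarrow> Q (Suc j) s' | Inr out \<Rightarrow> good (fst out) (snd out)"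
      by (rule step_Q[OF qs yap])
    show ?thesis unfolding S using st by (auto split: sum.splits)
  next
    case (Inr out)
    have a: "alg (hist alg Orc j) = Inr out" unfolding alg_eq[of "hist alg Orc _"] using Inr by simp
    have H: "hist alg Orc (Suc j) = hist alg Orc j" using a by simp
    show ?thesis unfolding H using Suc.IH Inr by auto
  qed
qed

lemma returns:
  assumes orc: "is_approx_prox_oracle g \<omega> \<alpha> \<delta> Orc"
    and N: "real (nn + 2) \<le> N"
  shows "\<exists>y lam. returns_within alg Orc N (y, lam) \<and> good y lam"
proof -
  let ?S = "\<lambda>j. run s0 (map snd (hist alg Orc j))"
  have ex: "\<exists>out. ?S (nn + 2) = Inr out"
  proof (cases "?S (nn + 2)")
    case (Inl s)
    hence "Q (nn + 2) s" using S_inv[OF orc] by blast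
    thus ?thesis using Q_bound by fastforce
  qed auto
  define k where "k = (LEAST j. \<exists>out. ?S j = Inr out)"
  have kex: "\<exists>out. ?S k = Inr out" unfolding k_def using ex by (rule LeastI_ex[OF exI])
  have kle: "k \<le> nn + 2" unfolding k_def using ex by (rule Least_le)
  obtain out where out: "?S k = Inr out" using kex by blast
  have before: "isl (alg (hist alg Orc j))" if "j < k" for j
  proof -
    have "\<not> (\<exists>out. ?S j = Inr out)" using not_less_Least[OF that[unfolded k_def]] by blast
    then obtain s where "?S j = Inl s" by (cases "?S j") auto
    thus ?thesis unfolding alg_eq[of "hist alg Orc _"] by simp
  qed
  have ak: "alg (hist alg Orc k) = Inr out" unfolding alg_eq[of "hist alg Orc _"] using out by simp
  have g: "good (fst out) (snd out)" using S_inv[OF orc] out by blast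
  have "real k \<le> N" using kle N by linarith
  hence "returns_within alg Orc N (fst out, snd out)"
    unfolding returns_within_def using before ak by auto
  thus ?thesis using g by blast
qed

end


context psetup begin

lemma count_bound:
  "real (nn + 2) \<le> 6 + log 2 ((160 * \<mu> * R * c / \<delta> + 9 * R^2 / \<epsilon>) * \<omega> (8 * c * \<mu> * R))"
proof -
  define T where "T = 14 * \<mu> * R * \<omega>2 / \<delta>"
  define Big where "Big = (160 * \<mu> * R * c / \<delta> + 9 * R^2 / \<epsilon>) * \<omega> (8 * c * \<mu> * R)"
  have mR: "\<mu> * R > 0" using mu_pos R by simp
  have W: "W0 > 0" unfolding W0_def using psi_order by simp
  have Q0: "W0 / \<kappa> > 0" using W kappa_pos by simp
  have "W0 \<le> 2 * s2" unfolding W0_def \<psi>0_def using psi1_pos by simp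
  hence "W0 / \<kappa> \<le> 2 * s2 / \<kappa>" using kappa_pos by (intro divide_right_mono) auto
  also have "2 * s2 / \<kappa> = T" unfolding T_def \<kappa>_def using s2_pos mR delta_pos s2_sq
    by (simp add: power2_eq_square)
  finally have QT: "W0 / \<kappa> \<le> T" .
  have T1: "T \<ge> 1"
  proof -
    have "\<delta> \<le> 2 * R * \<omega>2 / (9 * \<mu> * c)" by (rule delta_small)
    also have "\<dots> \<le> 14 * \<mu> * R * \<omega>2"
    proof -
      have "(2::real) \<le> 14 * (9 * \<mu> * c) * \<mu>"
      proof -
        have "(8::real) \<le> \<mu> * c" using mu_ge c by (metis mult_le_cancel_left1 order_trans mult_left_mono[of 1 c \<mu>] less_imp_le mu_pos mult.right_neutral)
        moreover have "\<mu> \<ge> 1" using mu_ge by simp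
        ultimately have "8 * 1 \<le> (\<mu> * c) * \<mu>" by (intro mult_mono) auto
        thus ?thesis by (simp add: algebra_simps)
      qed
      hence "2 * (R * \<omega>2) \<le> (14 * (9 * \<mu> * c) * \<mu>) * (R * \<omega>2)" using R om2_pos
        by (intro mult_right_mono) auto
      moreover have "9 * \<mu> * c > 0" using mu_pos c by simp
      ultimately show ?thesis by (simp add: divide_le_eq algebra_simps)
    qed
    finally show ?thesis unfolding T_def using delta_pos by simp
  qed
  have TB: "T \<le> Big"
  proof -
    have o: "\<omega>2 \<le> \<omega> (8 * c * \<mu> * R)" unfolding \<omega>2_def
    proof (rule om_mono)
      show "0 \<le> 2 * \<mu> * R" using mu_pos R by simp
      have "2 * (\<mu> * R) \<le> (8 * c) * (\<mu> * R)" using c mR by (intro mult_right_mono) auto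
      thus "2 * \<mu> * R \<le> 8 * c * \<mu> * R" by (simp add: mult.assoc)
    qed
    have "T = (14 * \<mu> * R / \<delta>) * \<omega>2" unfolding T_def by simp
    also have "\<dots> \<le> (160 * \<mu> * R * c / \<delta> + 9 * R^2 / \<epsilon>) * \<omega> (8 * c * \<mu> * R)"
    proof (rule mult_mono[OF _ o])
      have "14 * (\<mu> * R) \<le> (160 * c) * (\<mu> * R)" using c mR by (intro mult_right_mono) auto
      hence "14 * \<mu> * R / \<delta> \<le> 160 * \<mu> * R * c / \<delta>" using delta_pos
        by (intro divide_right_mono) (auto simp: algebra_simps)
      moreover have "9 * R^2 / \<epsilon> \<ge> 0" using eps by simp
      ultimately show "14 * \<mu> * R / \<delta> \<le> 160 * \<mu> * R * c / \<delta> + 9 * R^2 / \<epsilon>" by linarith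
      show "0 \<le> 160 * \<mu> * R * c / \<delta> + 9 * R^2 / \<epsilon>" using mu_pos R c delta_pos eps
        by (intro add_nonneg_nonneg) auto
      show "0 \<le> \<omega>2" using om2_pos by simp
    qed
    finally show ?thesis unfolding Big_def .
  qed
  have lT: "log 2 T \<ge> 0" using T1 by simp
  have lQ: "log 2 (W0 / \<kappa>) \<le> log 2 T" using QT Q0 by simp
  have lB: "log 2 T \<le> log 2 Big" using TB T1 by simp
  have "real nn \<le> max 0 (log 2 (W0 / \<kappa>) + 1)" unfolding nn_def by linarith
  also have "\<dots> \<le> log 2 T + 1" using lT lQ by simp
  finally show ?thesis using lB unfolding Big_def by simp
qed

end


theorem mainTheorem16:
  fixes \<omega> \<omega>' :: "real \<Rightarrow> real"
    and \<gamma> \<alpha> \<mu> c \<delta> \<epsilon> R A :: real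
    and x1 x2 :: "'a::euclidean_space"
  assumes eps: "\<epsilon> > 0"
    and R: "R > 0"
    and omega_nonneg: "\<forall>s\<ge>0. \<omega> s \<ge> 0"
    and omega_deriv: "\<forall>s\<ge>0. (\<omega> has_real_derivative \<omega>' s) (at s within {0..})"
    and omega_C1: "continuous_on {0..} \<omega>'"
    and omega_deriv_bounds: "\<forall>s>0. 0 < \<omega>' s \<and> \<omega>' s \<le> \<gamma> * \<omega> s / s"
    and gamma: "\<gamma> \<ge> 1"
    and alpha: "0 \<le> \<alpha>" "\<alpha> < 1"
    and mu: "\<mu> = 8 / sqrt (1 - \<alpha>)"
    and c: "c \<ge> 1" "64 * (\<alpha> + 1 / c) * \<gamma>^2 \<le> 1"
    and delta_pos: "\<delta> > 0"
    and delta: "\<delta> \<le> min (\<epsilon> / (9 * \<mu> * R * c * ((1 + \<alpha>) * c + 1)))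
                         (8 * \<mu> * R * \<omega> (8 * \<mu> * R))"
    and A: "1 / (2 * \<omega> (2 * \<mu> * R)) \<le> A" "A \<le> R^2 / \<epsilon>"
  shows "\<exists>alg :: ('a \<times> 'a) list \<Rightarrow> 'a + ('a \<times> real).
     \<forall>(g :: 'a \<Rightarrow> real) xstar Orc.
       convex_on UNIV g \<and>
       (\<forall>x. g differentiable (at x)) \<and> (\<forall>x. grad g differentiable (at x)) \<and>
       (\<forall>x. g xstar \<le> g x) \<and> norm xstar \<le> R \<and>
       norm (x1 - xstar) \<le> \<mu> * R \<and> norm (x2 - xstar) \<le> \<mu> * R \<and>
       is_approx_prox_oracle g \<omega> \<alpha> \<delta> Orc
       \<longrightarrow>
       (\<exists>y lam. returns_within alg Orc
                 (6 + log 2 ((160 * \<mu> * R * c / \<delta> + 9 * R^2 / \<epsilon>) * \<omega> (8 * c * \<mu> * R)))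
                 (y, lam) \<and>
          lam > 0 \<and>
          (let a = (lam + sqrt (lam^2 + 4 * lam * A)) / 2;
               xt = (a / (A + a)) *\<^sub>R x1 + (A / (A + a)) *\<^sub>R x2;
               r = norm (y - xt)
           in (g y \<le> g xstar + \<epsilon> \<and> \<omega> r * r \<le> c * \<delta>)
              \<or> (1/2 \<le> lam * \<omega> r \<and> lam * \<omega> r \<le> 1 \<and> \<omega> r * r > c * \<delta> \<and>
                 norm (grad g y + \<omega> r *\<^sub>R (y - xt)) \<le> \<alpha> * \<omega> r * r + \<delta>)))"
proof -
  interpret P: psetup \<omega> \<omega>' \<gamma> \<alpha> \<mu> c \<delta> \<epsilon> R A x1 x2
    by unfold_locales (fact eps R omega_nonneg omega_deriv omega_deriv_bounds gamma alpha mu c delta_pos delta A)+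
  show ?thesis
  proof (rule exI[of _ P.alg], intro allI impI)
    fix g :: "'a \<Rightarrow> real" and xstar Orc
    assume H: "convex_on UNIV g \<and>
       (\<forall>x. g differentiable (at x)) \<and> (\<forall>x. grad g differentiable (at x)) \<and>
       (\<forall>x. g xstar \<le> g x) \<and> norm xstar \<le> R \<and>
       norm (x1 - xstar) \<le> \<mu> * R \<and> norm (x2 - xstar) \<le> \<mu> * R \<and>
       is_approx_prox_oracle g \<omega> \<alpha> \<delta> Orc"
    interpret G: gsetup \<omega> \<omega>' \<gamma> \<alpha> \<mu> c \<delta> \<epsilon> R A x1 x2 g xstar
      by unfold_locales (use H in auto)
    have orc: "is_approx_prox_oracle g \<omega> \<alpha> \<delta> Orc" using H by blast
    obtain y lam where yl: "returns_within P.alg Orc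
                 (6 + log 2 ((160 * \<mu> * R * c / \<delta> + 9 * R^2 / \<epsilon>) * \<omega> (8 * c * \<mu> * R))) (y, lam)"
      and gd: "G.good y lam"
      using G.returns[OF orc P.count_bound] by blast
    show "\<exists>y lam. returns_within P.alg Orc
                 (6 + log 2 ((160 * \<mu> * R * c / \<delta> + 9 * R^2 / \<epsilon>) * \<omega> (8 * c * \<mu> * R)))
                 (y, lam) \<and>
          lam > 0 \<and>
          (let a = (lam + sqrt (lam^2 + 4 * lam * A)) / 2;
               xt = (a / (A + a)) *\<^sub>R x1 + (A / (A + a)) *\<^sub>R x2;
               r = norm (y - xt)
           in (g y \<le> g xstar + \<epsilon> \<and> \<omega> r * r \<le> c * \<delta>)
              \<or> (1/2 \<le> lam * \<omega> r \<and> lam * \<omega> r \<le> 1 \<and> \<omega> r * r > c * \<delta> \<and>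
                 norm (grad g y + \<omega> r *\<^sub>R (y - xt)) \<le> \<alpha> * \<omega> r * r + \<delta>))"
      using yl gd unfolding G.good_def by blast
  qed
qed

end
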